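(* Let $X,Y$ be Banach spaces and $N$ a positively octahedral absolute normalized norm on $\mathbb R^2$, and let $a,b\ge0$ be such that $N(a,b)=1$ and $N((a,b)+(0,1))=N((a,b)+(1,0))=2$. If $x\in S_X$ and $y\in S_Y$ are super Daugavet points, then $(ax,by)$ is a super Daugavet point of $X\oplus_NY$.
   Context: A norm $N$ on $\mathbb R^2$ is absolute if $N(a,b)=N(|a|,|b|)$ and normalized if $N(1,0)=N(0,1)=1$; it is positively octahedral if there exist $a,b\ge0$ with $N(a,b)=1$ and $N((a,b)+(0,1))=N((a,b)+(1,0))=2$. $X\oplus_NY$ is $X\times Y$ with norm $\|(x,y)\|=N(\|x\|,\|y\|)$. An element $x\in S_X$ is a super Daugavet point if $\sup_{z\in V}\|x-z\|=2$ for every non-empty relatively weakly open subset $V$ of $B_X$. *)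

theory Defs
  imports "HOL-Analysis.Analysis"
begin

definition is_norm_R2 :: "(real \<times> real \<Rightarrow> real) \<Rightarrow> bool" where
  "is_norm_R2 N \<longleftrightarrow>
     (\<forall>u. 0 \<le> N u) \<and> (\<forall>u. N u = 0 \<longleftrightarrow> u = (0,0)) \<and>
     (\<forall>c s t. N (c * s, c * t) = \<bar>c\<bar> * N (s, t)) \<and>
     (\<forall>s t s' t'. N (s + s', t + t') \<le> N (s, t) + N (s', t'))"

definition absolute_norm :: "(real \<times> real \<Rightarrow> real) \<Rightarrow> bool" where
  "absolute_norm N \<longleftrightarrow> is_norm_R2 N \<and> (\<forall>s t. N (s, t) = N (\<bar>s\<bar>, \<bar>t\<bar>))"

definition normalized_norm :: "(real \<times> real \<Rightarrow> real) \<Rightarrow> bool" where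
  "normalized_norm N \<longleftrightarrow> N (1, 0) = 1 \<and> N (0, 1) = 1"

definition positively_octahedral :: "(real \<times> real \<Rightarrow> real) \<Rightarrow> bool" where
  "positively_octahedral N \<longleftrightarrow>
     (\<exists>a b. 0 \<le> a \<and> 0 \<le> b \<and> N (a, b) = 1 \<and> N (a, b + 1) = 2 \<and> N (a + 1, b) = 2)"

definition oplus_norm :: "(real \<times> real \<Rightarrow> real) \<Rightarrow> ('a::real_normed_vector \<times> 'b::real_normed_vector) \<Rightarrow> real" where
  "oplus_norm N p = N (norm (fst p), norm (snd p))"

definition bounded_functional :: "('v::real_vector \<Rightarrow> real) \<Rightarrow> ('v \<Rightarrow> real) \<Rightarrow> bool" where
  "bounded_functional nrm f \<longleftrightarrow> linear f \<and> (\<exists>C. \<forall>v. \<bar>f v\<bar> \<le> C * nrm v)"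

definition weakly_open :: "('v::real_vector \<Rightarrow> real) \<Rightarrow> 'v set \<Rightarrow> bool" where
  "weakly_open nrm U \<longleftrightarrow>
     (\<forall>u\<in>U. \<exists>F \<epsilon>. finite F \<and> (\<forall>f\<in>F. bounded_functional nrm f) \<and> 0 < \<epsilon> \<and>
        {v. \<forall>f\<in>F. \<bar>f v - f u\<bar> < \<epsilon>} \<subseteq> U)"

definition unit_ball :: "('v \<Rightarrow> real) \<Rightarrow> 'v set" where
  "unit_ball nrm = {v. nrm v \<le> 1}"

definition super_daugavet_point :: "('v::real_vector \<Rightarrow> real) \<Rightarrow> 'v \<Rightarrow> bool" where
  "super_daugavet_point nrm x \<longleftrightarrow> nrm x = 1 \<and>
     (\<forall>U. weakly_open nrm U \<and> U \<inter> unit_ball nrm \<noteq> {} \<longrightarrow>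
          (SUP z\<in>U \<inter> unit_ball nrm. nrm (x - z)) = 2)"

end

theory Submission
  imports Defs
begin

lemma N_homog: assumes "is_norm_R2 N" shows "N (c * s, c * t) = \<bar>c\<bar> * N(s,t)"
  using assms unfolding is_norm_R2_def by blast

lemma N_tri: assumes "is_norm_R2 N" shows "N (s+s', t+t') \<le> N(s,t) + N(s',t')"
  using assms unfolding is_norm_R2_def by blast

lemma N_nonneg: assumes "is_norm_R2 N" shows "0 \<le> N p"
  using assms unfolding is_norm_R2_def by blast

lemma N_mono1:
  assumes A: "absolute_norm N" and "0 \<le> s" "s \<le> s'"
  shows "N(s,t) \<le> N(s',t)"
proof (cases "s' = 0")
  case True then show ?thesis using assms by simp
next
  case False
  have N: "is_norm_R2 N" using A absolute_norm_def by blast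
  have sp: "s' > 0" using False assms by simp
  define l where "l = (s+s')/(2 * s')"
  have l0: "0 \<le> l" "l \<le> 1" using sp assms unfolding l_def by (auto simp: field_simps)
  have e1: "s = l * s' + (1-l) * (-s')" using sp unfolding l_def by (simp add: field_simps)
  have e2: "t = l * t + (1-l) * t" by (simp add: algebra_simps)
  have "N(s,t) = N(l * s' + (1-l) * (-s'), l * t + (1-l) * t)" using e1 e2 by simp
  also have "\<dots> \<le> N(l * s', l * t) + N((1-l) * (-s'), (1-l) * t)" by (rule N_tri[OF N])
  also have "\<dots> = l * N(s',t) + (1-l) * N(-s',t)"
    using N_homog[OF N, of l s' t] N_homog[OF N, of "1-l" "-s'" t] l0 by simp
  also have "N(-s',t) = N(s',t)" using A unfolding absolute_norm_def
    by (metis abs_minus_cancel)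
  finally show ?thesis by (simp add: algebra_simps)
qed

lemma N_mono2:
  assumes A: "absolute_norm N" and "0 \<le> t" "t \<le> t'"
  shows "N(s,t) \<le> N(s,t')"
proof (cases "t' = 0")
  case True then show ?thesis using assms by simp
next
  case False
  have N: "is_norm_R2 N" using A absolute_norm_def by blast
  have sp: "t' > 0" using False assms by simp
  define l where "l = (t+t')/(2 * t')"
  have l0: "0 \<le> l" "l \<le> 1" using sp assms unfolding l_def by (auto simp: field_simps)
  have e1: "t = l * t' + (1-l) * (-t')" using sp unfolding l_def by (simp add: field_simps)
  have e2: "s = l * s + (1-l) * s" by (simp add: algebra_simps)
  have "N(s,t) = N(l * s + (1-l) * s, l * t' + (1-l) * (-t'))" using e1 e2 by simp
  also have "\<dots> \<le> N(l * s, l * t') + N((1-l) * s, (1-l) * (-t'))" by (rule N_tri[OF N])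
  also have "\<dots> = l * N(s,t') + (1-l) * N(s,-t')"
    using N_homog[OF N, of l s t'] N_homog[OF N, of "1-l" s "-t'"] l0 by simp
  also have "N(s,-t') = N(s,t')" using A unfolding absolute_norm_def
    by (metis abs_minus_cancel)
  finally show ?thesis by (simp add: algebra_simps)
qed

lemma N_mono:
  assumes A: "absolute_norm N" and "0 \<le> s" "s \<le> s'" "0 \<le> t" "t \<le> t'"
  shows "N(s,t) \<le> N(s',t')"
  using N_mono1[OF A, of s s' t] N_mono2[OF A, of t t' s'] assms by linarith

lemma N_axis1: assumes "is_norm_R2 N" "normalized_norm N" shows "N(c,0) = \<bar>c\<bar>"
  using N_homog[OF assms(1), of c 1 0] assms(2) unfolding normalized_norm_def by simp

lemma N_axis2: assumes "is_norm_R2 N" "normalized_norm N" shows "N(0,c) = \<bar>c\<bar>"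
  using N_homog[OF assms(1), of c 0 1] assms(2) unfolding normalized_norm_def by simp

lemma N_le_l1: assumes "is_norm_R2 N" "normalized_norm N" shows "N(d1,d2) \<le> \<bar>d1\<bar> + \<bar>d2\<bar>"
  using N_tri[OF assms(1), of d1 0 0 d2] N_axis1[OF assms] N_axis2[OF assms] by simp

lemma lin_sum:
  assumes N: "is_norm_R2 N" and P: "N(p1,p2) = 1" "N(q1,q2) = 1" "N(p1+q1,p2+q2) = 2"
    and st: "0 \<le> s" "0 \<le> t"
  shows "N(s * p1+t * q1, s * p2+t * q2) = s+t"
proof (rule antisym)
  show "N(s * p1+t * q1, s * p2+t * q2) \<le> s+t"
    using N_tri[OF N, of "s * p1" "t * q1" "s * p2" "t * q2"] N_homog[OF N] P st by simp
next
  show "s+t \<le> N(s * p1+t * q1, s * p2+t * q2)"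
  proof (cases "t \<le> s")
    case True
    have "N(s * (p1+q1), s * (p2+q2)) \<le> N(s * p1+t * q1, s * p2+t * q2) + N((s-t) * q1, (s-t) * q2)"
      using N_tri[OF N, of "s * p1+t * q1" "(s-t) * q1" "s * p2+t * q2" "(s-t) * q2"]
      by (simp add: algebra_simps)
    then show ?thesis using N_homog[OF N] P st True by simp
  next
    case False
    have "N(t * (p1+q1), t * (p2+q2)) \<le> N(s * p1+t * q1, s * p2+t * q2) + N((t-s) * p1, (t-s) * p2)"
      using N_tri[OF N, of "s * p1+t * q1" "(t-s) * p1" "s * p2+t * q2" "(t-s) * p2"]
      by (simp add: algebra_simps)
    then show ?thesis using N_homog[OF N] P st False by simp
  qed
qed

lemma keyK:
  assumes A: "absolute_norm N" and nn: "normalized_norm N"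
    and ab: "0 \<le> a" "0 \<le> b" "N (a, b) = 1" "N (a, b + 1) = 2" "N (a + 1, b) = 2"
    and al: "0 \<le> al" "0 \<le> be" "N(al,be) = 1"
  shows "N(a+al, b+be) = 2"
proof -
  have N: "is_norm_R2 N" using A absolute_norm_def by blast
  show ?thesis
  proof (cases "be * a \<le> al * b")
    case True
    show ?thesis
    proof (cases "b = 0")
      case True
      have "a = 1" using ab N_axis1[OF N nn, of a] True by simp
      then have "be = 0" using \<open>be * a \<le> al * b\<close> True al by simp
      then have "al = 1" using al N_axis1[OF N nn, of al] by simp
      then show ?thesis using \<open>a=1\<close> \<open>be=0\<close> True N_axis1[OF N nn, of 2] by simp
    next
      case False
      then have bp: "b > 0" using ab by simp
      define nu where "nu = be/b"
      define mu where "mu = al - nu * a"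
      have nu0: "0 \<le> nu" using al bp unfolding nu_def by simp
      have "nu * a \<le> al" using True bp unfolding nu_def by (simp add: field_simps)
      then have mu0: "0 \<le> mu" unfolding mu_def by simp
      have P1: "N(1,0) = 1" using nn normalized_norm_def by blast
      have P3: "N(1+a, 0+b) = 2" using ab by (simp add: add.commute)
      have c1: "N(mu * 1+nu * a, mu * 0+nu * b) = mu+nu" by (rule lin_sum[OF N P1 ab(3) P3 mu0 nu0])
      have "mu * 1+nu * a = al" "mu * 0+nu * b = be" using bp unfolding mu_def nu_def by auto
      then have s1: "mu+nu = 1" using c1 al by simp
      have c2: "N(mu * 1+(1+nu) * a, mu * 0+(1+nu) * b) = mu+(1+nu)"
        by (rule lin_sum[OF N P1 ab(3) P3 mu0]) (use nu0 in simp)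
      have "mu * 1+(1+nu) * a = a+al" "mu * 0+(1+nu) * b = b+be" using bp unfolding mu_def nu_def
        by (auto simp: algebra_simps)
      then show ?thesis using c2 s1 by simp
    qed
  next
    case False
    then have F: "al * b \<le> be * a" by simp
    show ?thesis
    proof (cases "a = 0")
      case True
      have "b = 1" using ab N_axis2[OF N nn, of b] True by simp
      then have "al = 0" using F True al by simp
      then have "be = 1" using al N_axis2[OF N nn, of be] by simp
      then show ?thesis using \<open>b=1\<close> \<open>al=0\<close> True N_axis2[OF N nn, of 2] by simp
    next
      case False
      then have bp: "a > 0" using ab by simp
      define nu where "nu = al/a"
      define mu where "mu = be - nu * b"
      have nu0: "0 \<le> nu" using al bp unfolding nu_def by simp
      have "nu * b \<le> be" using F bp unfolding nu_def by (simp add: field_simps)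
      then have mu0: "0 \<le> mu" unfolding mu_def by simp
      have P1: "N(0,1) = 1" using nn normalized_norm_def by blast
      have P3: "N(0+a, 1+b) = 2" using ab by (simp add: add.commute)
      have c1: "N(mu * 0+nu * a, mu * 1+nu * b) = mu+nu" by (rule lin_sum[OF N P1 ab(3) P3 mu0 nu0])
      have "mu * 0+nu * a = al" "mu * 1+nu * b = be" using bp unfolding mu_def nu_def by auto
      then have s1: "mu+nu = 1" using c1 al by simp
      have c2: "N(mu * 0+(1+nu) * a, mu * 1+(1+nu) * b) = mu+(1+nu)"
        by (rule lin_sum[OF N P1 ab(3) P3 mu0]) (use nu0 in simp)
      have "mu * 0+(1+nu) * a = a+al" "mu * 1+(1+nu) * b = b+be" using bp unfolding mu_def nu_def
        by (auto simp: algebra_simps)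
      then show ?thesis using c2 s1 by simp
    qed
  qed
qed

lemma wo_basic:
  assumes fin: "finite G" and bf: "\<forall>g\<in>G. bounded_functional nrm g" and e: "0 < e"
  shows "weakly_open nrm {w. \<forall>g\<in>G. \<bar>g w - g c\<bar> < e}"
  unfolding weakly_open_def
proof
  fix w0 assume w0: "w0 \<in> {w. \<forall>g\<in>G. \<bar>g w - g c\<bar> < e}"
  define eta where "eta = Min (insert e ((\<lambda>g. e - \<bar>g w0 - g c\<bar>) ` G))"
  have finS: "finite (insert e ((\<lambda>g. e - \<bar>g w0 - g c\<bar>) ` G))" using fin by simp
  have pos: "0 < eta" unfolding eta_def using finS e w0 by (subst Min_gr_iff) auto
  have le: "\<And>g. g \<in> G \<Longrightarrow> eta \<le> e - \<bar>g w0 - g c\<bar>" unfolding eta_def using finS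
    by (intro Min_le) auto
  have "{v. \<forall>g\<in>G. \<bar>g v - g w0\<bar> < eta} \<subseteq> {w. \<forall>g\<in>G. \<bar>g w - g c\<bar> < e}"
  proof
    fix v assume "v \<in> {v. \<forall>g\<in>G. \<bar>g v - g w0\<bar> < eta}"
    then have "\<forall>g\<in>G. \<bar>g v - g w0\<bar> < eta" by simp
    then show "v \<in> {w. \<forall>g\<in>G. \<bar>g w - g c\<bar> < e}"
      using le by (force simp: abs_diff_le_iff abs_less_iff)
  qed
  then show "\<exists>F \<epsilon>. finite F \<and> (\<forall>f\<in>F. bounded_functional nrm f) \<and> 0 < \<epsilon> \<and>
        {v. \<forall>f\<in>F. \<bar>f v - f w0\<bar> < \<epsilon>} \<subseteq> {w. \<forall>g\<in>G. \<bar>g w - g c\<bar> < e}"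
    using fin bf pos by blast
qed

lemma dist_lemma:
  fixes x w :: "'a::real_normed_vector"
  assumes "norm x = 1" "norm w \<le> 1" "2 - d < norm (x - w)" "0 \<le> s" "s \<le> 1" "0 \<le> t" "t \<le> 1" "0 < d"
  shows "s + t - d \<le> norm (s *\<^sub>R x - t *\<^sub>R w)"
proof (cases "t \<le> s")
  case True
  have eq: "s *\<^sub>R x - t *\<^sub>R w = s *\<^sub>R (x - w) + (s - t) *\<^sub>R w" by (simp add: algebra_simps)
  have "norm (s *\<^sub>R (x - w)) \<le> norm (s *\<^sub>R x - t *\<^sub>R w) + norm ((s - t) *\<^sub>R w)"
  proof -
    have eq2: "s *\<^sub>R (x - w) = (s *\<^sub>R x - t *\<^sub>R w) - (s - t) *\<^sub>R w" by (simp add: algebra_simps)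
    show ?thesis by (metis eq2 norm_triangle_ineq4)
  qed
  then have h1: "s * norm (x - w) \<le> norm (s *\<^sub>R x - t *\<^sub>R w) + (s - t) * norm w"
    using assms True by simp
  have h2: "s * (2 - d) \<le> s * norm (x - w)" using assms by (intro mult_left_mono) auto
  have h3: "(s - t) * norm w \<le> s - t" using assms True by (simp add: mult_left_le)
  have h4: "s * d \<le> d" using assms by (simp add: mult_left_le_one_le)
  have "s * (2 - d) = 2 * s - s * d" by (simp add: algebra_simps)
  then show ?thesis using h1 h2 h3 h4 by linarith
next
  case False
  have eq: "s *\<^sub>R x - t *\<^sub>R w = t *\<^sub>R (x - w) - (t - s) *\<^sub>R x" by (simp add: algebra_simps)
  have "norm (t *\<^sub>R (x - w)) \<le> norm (s *\<^sub>R x - t *\<^sub>R w) + norm ((t - s) *\<^sub>R x)"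
    using eq by (metis diff_add_cancel norm_triangle_ineq)
  then have h1: "t * norm (x - w) \<le> norm (s *\<^sub>R x - t *\<^sub>R w) + (t - s)"
    using assms False by simp
  have h2: "t * (2 - d) \<le> t * norm (x - w)" using assms by (intro mult_left_mono) auto
  have h4: "t * d \<le> d" using assms by (simp add: mult_left_le_one_le)
  have "t * (2 - d) = 2 * t - t * d" by (simp add: algebra_simps)
  then show ?thesis using h1 h2 h4 by linarith
qed

lemma sd_approx:
  fixes x :: "'a::real_normed_vector"
  assumes sd: "super_daugavet_point norm x" and wo: "weakly_open norm V"
    and ne: "z0 \<in> V" "norm z0 \<le> 1" and d: "0 < d"
  shows "\<exists>z\<in>V. norm z \<le> 1 \<and> 2 - d < norm (x - z)"
proof -
  let ?S = "V \<inter> unit_ball norm"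
  have nem: "?S \<noteq> {}" using ne unfolding unit_ball_def by auto
  have sup: "(SUP z\<in>?S. norm (x - z)) = 2" using sd wo nem unfolding super_daugavet_point_def by blast
  have nx: "norm x = 1" using sd super_daugavet_point_def by blast
  have bdd: "bdd_above ((\<lambda>z. norm (x - z)) ` ?S)"
  proof (rule bdd_aboveI2)
    fix z assume "z \<in> ?S"
    then have "norm z \<le> 1" unfolding unit_ball_def by simp
    then show "norm (x - z) \<le> 2" using norm_triangle_ineq4[of x z] nx by simp
  qed
  have "2 - d < (SUP z\<in>?S. norm (x - z))" using sup d by simp
  then obtain z where "z \<in> ?S" "2 - d < norm (x - z)" using less_cSUP_iff[OF nem bdd] by blast
  then show ?thesis unfolding unit_ball_def by auto
qed

lemma xstep:
  fixes x u :: "'a::real_normed_vector"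
  assumes sd: "super_daugavet_point norm x" and fin: "finite G"
    and bf: "\<forall>g\<in>G. bounded_functional norm g" and e: "0 < e"
    and u: "norm u \<le> t" "0 \<le> t" "t \<le> 1" and a: "0 \<le> a" "a \<le> 1" and d: "0 < d"
  shows "\<exists>z. (\<forall>g\<in>G. \<bar>g z - g u\<bar> < e) \<and> norm z \<le> t \<and> a + t - d \<le> norm (a *\<^sub>R x - z)"
proof (cases "t = 0")
  case True
  then have "u = 0" using u by simp
  moreover have "norm x = 1" using sd super_daugavet_point_def by blast
  ultimately show ?thesis using True e a d by (intro exI[of _ u]) auto
next
  case False
  then have tp: "0 < t" using u by simp
  define V where "V = {w. \<forall>g\<in>G. \<bar>g w - g (u /\<^sub>R t)\<bar> < e / t}"
  have wo: "weakly_open norm V" unfolding V_def by (rule wo_basic[OF fin bf]) (use e tp in simp)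
  have uV: "u /\<^sub>R t \<in> V" unfolding V_def using e tp by simp
  have un: "norm (u /\<^sub>R t) \<le> 1" using u tp by (simp add: field_simps)
  obtain z where z: "z \<in> V" "norm z \<le> 1" "2 - d < norm (x - z)"
    using sd_approx[OF sd wo uV un d] by blast
  have nx: "norm x = 1" using sd super_daugavet_point_def by blast
  have "\<forall>g\<in>G. \<bar>g (t *\<^sub>R z) - g u\<bar> < e"
  proof
    fix g assume g: "g \<in> G"
    then have lin: "linear g" using bf bounded_functional_def by blast
    have gu: "g u = t * g (u /\<^sub>R t)" using linear_scale[OF lin, of t "u /\<^sub>R t"] tp by simp
    have "g (t *\<^sub>R z) - g u = t * (g z - g (u /\<^sub>R t))"
      using linear_scale[OF lin, of t z] gu by (simp add: algebra_simps)
    moreover have "\<bar>g z - g (u /\<^sub>R t)\<bar> < e / t" using z g unfolding V_def by simp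
    ultimately show "\<bar>g (t *\<^sub>R z) - g u\<bar> < e" using tp
      by (simp add: abs_mult pos_less_divide_eq mult.commute)
  qed
  moreover have "norm (t *\<^sub>R z) \<le> t" using z tp by (simp add: mult_left_le)
  moreover have "a + t - d \<le> norm (a *\<^sub>R x - t *\<^sub>R z)"
    by (rule dist_lemma) (use nx z a u d in auto)
  ultimately show ?thesis by blast
qed

theorem mainTheorem7:
  fixes x :: "'a::banach" and y :: "'b::banach"
    and N :: "real \<times> real \<Rightarrow> real" and a b :: real
  assumes "absolute_norm N" and "normalized_norm N" and "positively_octahedral N"
    and "0 \<le> a" and "0 \<le> b"
    and "N (a, b) = 1" and "N (a, b + 1) = 2" and "N (a + 1, b) = 2"
    and "super_daugavet_point norm x" and "super_daugavet_point norm y"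
  shows "super_daugavet_point (oplus_norm N) (a *\<^sub>R x, b *\<^sub>R y)"
proof -
  note A = assms(1) and nn = assms(2) and a0 = assms(4) and b0 = assms(5)
    and ab = assms(6) and sdx = assms(9) and sdy = assms(10)
  have N: "is_norm_R2 N" using A absolute_norm_def by blast
  have a1: "a \<le> 1" using N_mono2[OF A, of 0 b a] b0 ab N_axis1[OF N nn, of a] a0 by simp
  have b1: "b \<le> 1" using N_mono1[OF A, of 0 a b] a0 ab N_axis2[OF N nn, of b] b0 by simp
  have nx: "norm x = 1" using sdx super_daugavet_point_def by blast
  have ny: "norm y = 1" using sdy super_daugavet_point_def by blast
  have part1: "oplus_norm N (a *\<^sub>R x, b *\<^sub>R y) = 1"
    unfolding oplus_norm_def using nx ny a0 b0 ab by simp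
  show ?thesis unfolding super_daugavet_point_def
  proof (intro conjI allI impI)
    show "oplus_norm N (a *\<^sub>R x, b *\<^sub>R y) = 1" by (rule part1)
    fix U :: "('a \<times> 'b) set"
    assume H: "weakly_open (oplus_norm N) U \<and> U \<inter> unit_ball (oplus_norm N) \<noteq> {}"
    let ?S = "U \<inter> unit_ball (oplus_norm N)"
    let ?h = "\<lambda>z. oplus_norm N ((a *\<^sub>R x, b *\<^sub>R y) - z)"
    have nem: "?S \<noteq> {}" using H by blast
    have ub: "\<forall>z\<in>?S. ?h z \<le> 2"
    proof
      fix z assume "z \<in> ?S"
      then have zb: "N (norm (fst z), norm (snd z)) \<le> 1"
        unfolding unit_ball_def oplus_norm_def by simp
      have t1: "norm (a *\<^sub>R x - fst z) \<le> a + norm (fst z)"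
        using norm_triangle_ineq4[of "a *\<^sub>R x" "fst z"] nx a0 by simp
      have t2: "norm (b *\<^sub>R y - snd z) \<le> b + norm (snd z)"
        using norm_triangle_ineq4[of "b *\<^sub>R y" "snd z"] ny b0 by simp
      have "?h z = N (norm (a *\<^sub>R x - fst z), norm (b *\<^sub>R y - snd z))"
        unfolding oplus_norm_def by simp
      also have "\<dots> \<le> N (a + norm (fst z), b + norm (snd z))"
        by (rule N_mono[OF A]) (use t1 t2 in auto)
      also have "\<dots> \<le> N (a, b) + N (norm (fst z), norm (snd z))" by (rule N_tri[OF N])
      finally show "?h z \<le> 2" using zb ab by simp
    qed
    have approx: "\<exists>z\<in>?S. 2 - d < ?h z" if d: "0 < d" for d
    proof -
      obtain p where p: "p \<in> U" "p \<in> unit_ball (oplus_norm N)" using H by blast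
      obtain u v where uv: "p = (u, v)" by (cases p)
      obtain F \<epsilon> where F: "finite F" "\<forall>f\<in>F. bounded_functional (oplus_norm N) f" "0 < \<epsilon>"
        "{w. \<forall>f\<in>F. \<bar>f w - f (u, v)\<bar> < \<epsilon>} \<subseteq> U"
        using H p uv unfolding weakly_open_def by blast
      define G1 where "G1 = (\<lambda>f. \<lambda>w. f (w, 0::'b)) ` F"
      define G2 where "G2 = (\<lambda>f. \<lambda>w. f (0::'a, w)) ` F"
      have finG1: "finite G1" "finite G2" using F unfolding G1_def G2_def by auto
      have bfG1: "\<forall>g\<in>G1. bounded_functional norm g"
      proof
        fix g assume "g \<in> G1"
        then obtain f where f: "f \<in> F" "g = (\<lambda>w. f (w, 0::'b))" unfolding G1_def by blast
        then have lin: "linear f" and bd: "\<exists>C. \<forall>q. \<bar>f q\<bar> \<le> C * oplus_norm N q"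
          using F unfolding bounded_functional_def by auto
        have "linear g" unfolding f(2)
        proof (rule linearI)
          fix b1 b2 :: 'a
          show "f (b1 + b2, 0) = f (b1, 0) + f (b2, 0)"
            using linear_add[OF lin, of "(b1, 0)" "(b2, 0)"] by simp
        next
          fix r and b :: 'a
          show "f (r *\<^sub>R b, 0) = r *\<^sub>R f (b, 0)"
            using linear_scale[OF lin, of r "(b, 0)"] by simp
        qed
        moreover have "\<exists>C. \<forall>w. \<bar>g w\<bar> \<le> C * norm w"
        proof -
          obtain C where C: "\<forall>q. \<bar>f q\<bar> \<le> C * oplus_norm N q" using bd by blast
          have "\<bar>g w\<bar> \<le> C * norm w" for w
          proof -
            have "\<bar>f (w, 0)\<bar> \<le> C * N (norm w, norm (0::'b))"
              using C[rule_format, of "(w, 0)"] unfolding oplus_norm_def by simp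
            then show ?thesis unfolding f(2) using N_axis1[OF N nn, of "norm w"] by simp
          qed
          then show ?thesis by blast
        qed
        ultimately show "bounded_functional norm g" unfolding bounded_functional_def by blast
      qed
      have bfG2: "\<forall>g\<in>G2. bounded_functional norm g"
      proof
        fix g assume "g \<in> G2"
        then obtain f where f: "f \<in> F" "g = (\<lambda>w. f (0::'a, w))" unfolding G2_def by blast
        then have lin: "linear f" and bd: "\<exists>C. \<forall>q. \<bar>f q\<bar> \<le> C * oplus_norm N q"
          using F unfolding bounded_functional_def by auto
        have "linear g" unfolding f(2)
        proof (rule linearI)
          fix b1 b2 :: 'b
          show "f (0, b1 + b2) = f (0, b1) + f (0, b2)"
            using linear_add[OF lin, of "(0, b1)" "(0, b2)"] by simp
        next
          fix r and b :: 'b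
          show "f (0, r *\<^sub>R b) = r *\<^sub>R f (0, b)"
            using linear_scale[OF lin, of r "(0, b)"] by simp
        qed
        moreover have "\<exists>C. \<forall>w. \<bar>g w\<bar> \<le> C * norm w"
        proof -
          obtain C where C: "\<forall>q. \<bar>f q\<bar> \<le> C * oplus_norm N q" using bd by blast
          have "\<bar>g w\<bar> \<le> C * norm w" for w
          proof -
            have "\<bar>f (0, w)\<bar> \<le> C * N (norm (0::'a), norm w)"
              using C[rule_format, of "(0, w)"] unfolding oplus_norm_def by simp
            then show ?thesis unfolding f(2) using N_axis2[OF N nn, of "norm w"] by simp
          qed
          then show ?thesis by blast
        qed
        ultimately show "bounded_functional norm g" unfolding bounded_functional_def by blast
      qed
      have pb: "N (norm u, norm v) \<le> 1" using p uv unfolding unit_ball_def oplus_norm_def by simp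
      obtain al be where albe: "0 \<le> al" "0 \<le> be" "norm u \<le> al" "norm v \<le> be" "N (al, be) = 1"
      proof (cases "N (norm u, norm v) = 0")
        case True
        then have "norm u = 0" "norm v = 0" using N unfolding is_norm_R2_def by auto
        then show ?thesis using that[of 1 0] nn unfolding normalized_norm_def by simp
      next
        case False
        define n where "n = N (norm u, norm v)"
        have np: "0 < n" using False N_nonneg[OF N] unfolding n_def by (metis order_less_le)
        have n1: "n \<le> 1" using pb n_def by simp
        have "N ((1/n) * norm u, (1/n) * norm v) = 1"
          using N_homog[OF N, of "1/n" "norm u" "norm v"] np unfolding n_def by simp
        moreover have "norm u \<le> (1/n) * norm u" "norm v \<le> (1/n) * norm v"
          using np n1 mult_left_le_one_le[of "norm u" n] mult_left_le_one_le[of "norm v" n]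
          by (simp_all add: field_simps mult.commute)
        ultimately show ?thesis using that[of "(1/n) * norm u" "(1/n) * norm v"] np by simp
      qed
      have al1: "al \<le> 1" using N_mono2[OF A, of 0 be al] albe N_axis1[OF N nn, of al] by simp
      have be1: "be \<le> 1" using N_mono1[OF A, of 0 al be] albe N_axis2[OF N nn, of be] by simp
      have e2: "0 < \<epsilon> / 2" "0 < d / 3" using F d by auto
      obtain z1 where z1: "\<forall>g\<in>G1. \<bar>g z1 - g u\<bar> < \<epsilon> / 2" "norm z1 \<le> al"
        "a + al - d / 3 \<le> norm (a *\<^sub>R x - z1)"
        using xstep[OF sdx finG1(1) bfG1 e2(1) albe(3) albe(1) al1 a0 a1 e2(2)] by blast
      obtain z2 where z2: "\<forall>g\<in>G2. \<bar>g z2 - g v\<bar> < \<epsilon> / 2" "norm z2 \<le> be"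
        "b + be - d / 3 \<le> norm (b *\<^sub>R y - z2)"
        using xstep[OF sdy finG1(2) bfG2 e2(1) albe(4) albe(2) be1 b0 b1 e2(2)] by blast
      have inU: "(z1, z2) \<in> U"
      proof -
        have "\<forall>f\<in>F. \<bar>f (z1, z2) - f (u, v)\<bar> < \<epsilon>"
        proof
          fix f assume f: "f \<in> F"
          then have lin: "linear f" using F bounded_functional_def by blast
          have e1: "\<bar>f (z1, 0) - f (u, 0)\<bar> < \<epsilon> / 2" using z1(1) f unfolding G1_def by auto
          have e2: "\<bar>f (0, z2) - f (0, v)\<bar> < \<epsilon> / 2" using z2(1) f unfolding G2_def by auto
          have s1: "f (z1, z2) = f (z1, 0) + f (0, z2)"
            using linear_add[OF lin, of "(z1, 0)" "(0, z2)"] by simp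
          have s2: "f (u, v) = f (u, 0) + f (0, v)"
            using linear_add[OF lin, of "(u, 0)" "(0, v)"] by simp
          show "\<bar>f (z1, z2) - f (u, v)\<bar> < \<epsilon>"
            using e1 e2 unfolding s1 s2 abs_less_iff by linarith
        qed
        then show ?thesis using F(4) by blast
      qed
      have inB: "(z1, z2) \<in> unit_ball (oplus_norm N)"
        unfolding unit_ball_def oplus_norm_def
        using N_mono[OF A, of "norm z1" al "norm z2" be] z1 z2 albe by simp
      define s1 where "s1 = norm (a *\<^sub>R x - z1)"
      define s2 where "s2 = norm (b *\<^sub>R y - z2)"
      have s1u: "s1 \<le> a + al" unfolding s1_def
        using norm_triangle_ineq4[of "a *\<^sub>R x" z1] nx a0 z1 by simp
      have s2u: "s2 \<le> b + be" unfolding s2_def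
        using norm_triangle_ineq4[of "b *\<^sub>R y" z2] ny b0 z2 by simp
      have K: "N (a + al, b + be) = 2"
        by (rule keyK[OF A nn a0 b0 ab assms(7) assms(8) albe(1) albe(2) albe(5)])
      have "N (a + al, b + be) \<le> N (s1, s2) + N (a + al - s1, b + be - s2)"
        using N_tri[OF N, of s1 "a + al - s1" s2 "b + be - s2"] by simp
      also have "N (a + al - s1, b + be - s2) \<le> \<bar>a + al - s1\<bar> + \<bar>b + be - s2\<bar>"
        by (rule N_le_l1[OF N nn])
      finally have "2 \<le> N (s1, s2) + \<bar>a + al - s1\<bar> + \<bar>b + be - s2\<bar>" using K by simp
      then have "2 - d < N (s1, s2)" using s1u s2u z1(3) z2(3) d
        unfolding s1_def s2_def by simp
      moreover have "?h (z1, z2) = N (s1, s2)" unfolding oplus_norm_def s1_def s2_def by simp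
      ultimately show ?thesis using inU inB by (intro bexI[of _ "(z1, z2)"]) auto
    qed
    have bdd: "bdd_above (?h ` ?S)" using ub by (intro bdd_aboveI2) auto
    show "(SUP z\<in>?S. ?h z) = 2"
    proof (rule antisym)
      show "(SUP z\<in>?S. ?h z) \<le> 2" using ub nem by (intro cSUP_least) auto
    next
      show "2 \<le> (SUP z\<in>?S. ?h z)"
      proof (rule ccontr)
        assume "\<not> 2 \<le> (SUP z\<in>?S. ?h z)"
        then have "0 < 2 - (SUP z\<in>?S. ?h z)" by simp
        then obtain z where z: "z \<in> ?S" "2 - (2 - (SUP z\<in>?S. ?h z)) < ?h z"
          using approx by blast
        have "?h z \<le> (SUP z\<in>?S. ?h z)" using z(1) bdd by (rule cSUP_upper)
        then show False using z(2) by simp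
      qed
    qed
  qed
qed

end
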